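(* Let $X$ be a locally compact, completely regular Hausdorff ($T_{3\frac12}$) space, let $\hat X$ be any compactification of $X$, and let $a\subseteq X$. Then every end $e$ of $a$ has non-empty connected boundary $\partial e$.
   Context: An end of a subset $a\subseteq X$ is a function $e$ from the family of compact subsets of $X$ to subsets of $a$ such that: - for each compact $K\subseteq X$, $e(K)$ is a connected component of $a\setminus K$; - $e(K)\supseteq e(K')$ whenever $K\subseteq K'$ are compact. For $b\subseteq X$, its boundary is $\partial b=\overline{b}^{\hat X}\setminus X$, the closure of $b$ taken in $\hat X$, minus $X$. The boundary of the end $e$ is $\partial e=\bigcap_{K\subseteq X\text{ compact}}\partial e(K)$. *)

theory Defs
  imports "HOL-Analysis.Analysis"
begin

text \<open>The values of e on non-compact sets are irrelevant.\<close>
definition end_of :: "'a topology \<Rightarrow> 'a set \<Rightarrow> ('a set \<Rightarrow> 'a set) \<Rightarrow> bool" where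
  "end_of X a e \<longleftrightarrow>
     (\<forall>K. compactin X K \<longrightarrow> e K \<in> connected_components_of (subtopology X (a - K))) \<and>
     (\<forall>K K'. compactin X K \<and> compactin X K' \<and> K \<subseteq> K' \<longrightarrow> e K' \<subseteq> e K)"

definition compactification :: "'a topology \<Rightarrow> 'b topology \<Rightarrow> ('a \<Rightarrow> 'b) \<Rightarrow> bool" where
  "compactification X Y h \<longleftrightarrow>
     compact_space Y \<and> Hausdorff_space Y \<and> embedding_map X Y h \<and>
     Y closure_of (h ` topspace X) = topspace Y"

definition cboundary :: "'a topology \<Rightarrow> 'b topology \<Rightarrow> ('a \<Rightarrow> 'b) \<Rightarrow> 'a set \<Rightarrow> 'b set" where
  "cboundary X Y h b = (Y closure_of (h ` b)) - h ` topspace X"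

definition end_boundary :: "'a topology \<Rightarrow> 'b topology \<Rightarrow> ('a \<Rightarrow> 'b) \<Rightarrow> ('a set \<Rightarrow> 'a set) \<Rightarrow> 'b set" where
  "end_boundary X Y h e = (\<Inter>K\<in>{K. compactin X K}. cboundary X Y h (e K))"

end

theory Submission imports Defs begin

lemma directed_Inter_connected:
  assumes Y: "compact_space Y" "Hausdorff_space Y" and ne: "\<C> \<noteq> {}"
    and C: "\<And>C. C \<in> \<C> \<Longrightarrow> closedin Y C \<and> connectedin Y C \<and> C \<noteq> {}"
    and dir: "\<And>\<F>. finite \<F> \<Longrightarrow> \<F> \<subseteq> \<C> \<Longrightarrow> \<exists>C\<in>\<C>. C \<subseteq> \<Inter>\<F>"
  shows "\<Inter>\<C> \<noteq> {} \<and> connectedin Y (\<Inter>\<C>)"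
proof
  show "\<Inter>\<C> \<noteq> {}"
    using Y(1)[unfolded compact_space_fip] C dir by (metis subset_empty)
next
  have sub: "\<Inter>\<C> \<subseteq> topspace Y" using ne C closedin_subset by blast
  have cl: "closedin Y (\<Inter>\<C>)" using ne C by (intro closedin_Inter) auto
  show "connectedin Y (\<Inter>\<C>)"
    unfolding connectedin_closedin
  proof (intro conjI sub notI, elim exE conjE)
    fix E1 E2
    assume e: "closedin Y E1" "closedin Y E2" "\<Inter>\<C> \<subseteq> E1 \<union> E2" "E1 \<inter> E2 \<inter> \<Inter>\<C> = {}"
      "E1 \<inter> \<Inter>\<C> \<noteq> {}" "E2 \<inter> \<Inter>\<C> \<noteq> {}"
    have "compactin Y (E1 \<inter> \<Inter>\<C>)" "compactin Y (E2 \<inter> \<Inter>\<C>)"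
      using e cl Y(1) closedin_compact_space closedin_Int by blast+
    moreover have "disjnt (E1 \<inter> \<Inter>\<C>) (E2 \<inter> \<Inter>\<C>)" using e(4) by (auto simp: disjnt_def)
    ultimately obtain U V where UV: "openin Y U" "openin Y V" "E1 \<inter> \<Inter>\<C> \<subseteq> U"
      "E2 \<inter> \<Inter>\<C> \<subseteq> V" "disjnt U V"
      using Y(2) Hausdorff_space_compact_sets by metis
    define \<U> where "\<U> = (\<lambda>C. C - (U \<union> V)) ` \<C>"
    have "\<Inter>\<U> = {}"
    proof (rule ccontr)
      assume "\<Inter>\<U> \<noteq> {}"
      then obtain x where x: "x \<in> \<Inter>\<U>" by blast
      obtain C1 where "C1 \<in> \<C>" using ne by blast
      then have "x \<notin> U \<union> V" using x unfolding \<U>_def by blast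
      moreover have "x \<in> \<Inter>\<C>" using x unfolding \<U>_def by blast
      ultimately
      show False using e(3) UV(3,4) by blast
    qed
    moreover have "\<forall>D\<in>\<U>. closedin Y D" using C UV unfolding \<U>_def by auto
    ultimately obtain \<F> where F: "finite \<F>" "\<F> \<subseteq> \<U>" "\<Inter>\<F> = {}"
    proof -
      note fip = Y(1)[unfolded compact_space_fip, rule_format, of \<U>]
      show ?thesis using fip that \<open>\<Inter>\<U> = {}\<close> \<open>\<forall>D\<in>\<U>. closedin Y D\<close> by blast
    qed
    then obtain \<G> where G: "finite \<G>" "\<G> \<subseteq> \<C>" "\<F> = (\<lambda>C. C - (U \<union> V)) ` \<G>"
      unfolding \<U>_def by (meson finite_subset_image)
    obtain C0 where C0: "C0 \<in> \<C>" "C0 \<subseteq> \<Inter>\<G>" using dir G by blast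
    have C0UV: "C0 \<subseteq> U \<union> V"
    proof
      fix x assume "x \<in> C0"
      then have "x \<in> \<Inter>\<G>" using C0 by blast
      show "x \<in> U \<union> V"
      proof (rule ccontr)
        assume "x \<notin> U \<union> V"
        then have "x \<in> \<Inter>\<F>" using \<open>x \<in> \<Inter>\<G>\<close> G(3) by blast
        then show False using F(3) by blast
      qed
    qed
    have "\<Inter>\<C> \<subseteq> C0" using C0(1) by blast
    moreover have "U \<inter> C0 \<noteq> {}" using e(5) UV(3) \<open>\<Inter>\<C> \<subseteq> C0\<close> by blast
    moreover have "V \<inter> C0 \<noteq> {}" using e(6) UV(4) \<open>\<Inter>\<C> \<subseteq> C0\<close> by blast
    moreover have "connectedin Y C0" using C C0 by blast
    ultimately have H: "C0 \<subseteq> U \<union> V" "U \<inter> C0 \<noteq> {}" "V \<inter> C0 \<noteq> {}" "connectedin Y C0"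
      using C0UV by auto
    have "closedin Y (topspace Y - V)" "closedin Y (topspace Y - U)" using UV by auto
    moreover have "C0 \<subseteq> (topspace Y - V) \<union> (topspace Y - U)"
      using UV(5) H(4) connectedin_subset_topspace by (fastforce simp: disjnt_def)
    moreover have "(topspace Y - V) \<inter> (topspace Y - U) \<inter> C0 = {}" using H(1) by blast
    moreover have "(topspace Y - V) \<inter> C0 \<noteq> {}"
      using H(2) UV(5) openin_subset[OF UV(1)] by (auto simp: disjnt_def)
    moreover have "(topspace Y - U) \<inter> C0 \<noteq> {}"
      using H(3) UV(5) openin_subset[OF UV(2)] by (auto simp: disjnt_def)
    ultimately show False using H(4) unfolding connectedin_closedin by blast
  qed
qed
theorem mainTheorem7:
  fixes X :: "'a topology" and Y :: "'b topology" and h :: "'a \<Rightarrow> 'b"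
    and a :: "'a set" and e :: "'a set \<Rightarrow> 'a set"
  assumes "locally_compact_space X"
    and "completely_regular_space X"
    and "Hausdorff_space X"
    and "compactification X Y h"
    and "a \<subseteq> topspace X"
    and "end_of X a e"
  shows "end_boundary X Y h e \<noteq> {} \<and> connectedin Y (end_boundary X Y h e)"
proof -
  have cY: "compact_space Y" "Hausdorff_space Y" and emb: "embedding_map X Y h"
    using assms(4) unfolding compactification_def by auto
  have hom: "homeomorphic_map X (subtopology Y (h ` topspace X)) h"
    using emb unfolding embedding_map_def .
  have cont: "continuous_map X Y h"
    using homeomorphic_imp_continuous_map[OF hom] continuous_map_in_subtopology by blast
  have inj: "inj_on h (topspace X)" using homeomorphic_imp_injective_map[OF hom] .
  have comp: "e K \<in> connected_components_of (subtopology X (a - K))" if "compactin X K" for K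
    using assms(6) that unfolding end_of_def by blast
  have mono: "e K' \<subseteq> e K" if "compactin X K" "compactin X K'" "K \<subseteq> K'" for K K'
    using assms(6) that unfolding end_of_def by blast
  have eK: "e K \<noteq> {} \<and> connectedin X (e K) \<and> e K \<subseteq> a - K" if "compactin X K" for K
    using comp[OF that] nonempty_connected_components_of connectedin_connected_components_of
      connectedin_subtopology by metis
  define C where "C K = Y closure_of (h ` e K)" for K
  define \<C> where "\<C> = C ` {K. compactin X K}"
  have CC: "closedin Y D \<and> connectedin Y D \<and> D \<noteq> {}" if Din: "D \<in> \<C>" for D
  proof -
    obtain K where K: "compactin X K" "D = C K" using Din unfolding \<C>_def by blast
    have "connectedin Y (h ` e K)"
      using eK[OF K(1)] connectedin_continuous_map_image cont by blast
    then have "connectedin Y D" unfolding K C_def by (rule connectedin_closure_of)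
    moreover have "h ` e K \<subseteq> D" unfolding K C_def
      by (rule closure_of_subset) (use \<open>connectedin Y (h ` e K)\<close> connectedin_subset_topspace in blast)
    ultimately show ?thesis using eK[OF K(1)] unfolding K C_def by auto
  qed
  have dir: "\<exists>D\<in>\<C>. D \<subseteq> \<Inter>\<F>" if Fh: "finite \<F>" "\<F> \<subseteq> \<C>" for \<F>
  proof -
    obtain \<K> where K: "finite \<K>" "\<K> \<subseteq> {K. compactin X K}" "\<F> = C ` \<K>"
      using Fh unfolding \<C>_def by (meson finite_subset_image)
    have K0: "compactin X (\<Union>\<K>)" using K by (intro compactin_Union) auto
    have "C (\<Union>\<K>) \<subseteq> C K" if "K \<in> \<K>" for K
      unfolding C_def
      by (intro closure_of_mono image_mono mono K0) (use that K in auto)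
    then show ?thesis using K0 K(3) unfolding \<C>_def by blast
  qed
  have disj: "y \<notin> h ` topspace X" if yin: "y \<in> \<Inter>\<C>" for y
  proof
    assume "y \<in> h ` topspace X"
    then obtain x where x: "x \<in> topspace X" "y = h x" by blast
    obtain U N where UN: "openin X U" "compactin X N" "x \<in> U" "U \<subseteq> N"
      using assms(1) x(1) unfolding locally_compact_space_def by blast
    have "openin (subtopology Y (h ` topspace X)) (h ` U)"
      using homeomorphic_map_openness[OF hom openin_subset[OF UN(1)]] UN(1) by blast
    then obtain W where W: "openin Y W" "h ` U = W \<inter> h ` topspace X"
      unfolding openin_subtopology by blast
    have "W \<inter> h ` e N = {}"
    proof (rule ccontr)
      assume "W \<inter> h ` e N \<noteq> {}"
      then obtain z where z: "z \<in> e N" "h z \<in> W" by blast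
      have "z \<in> topspace X" "z \<notin> N" using z(1) eK[OF UN(2)] assms(5) by auto
      then have "h z \<in> h ` U" using W z by blast
      then obtain u where "u \<in> U" "h z = h u" by blast
      then have "z = u" using inj \<open>z \<in> topspace X\<close> openin_subset[OF UN(1)]
        by (meson inj_onD subsetD)
      then show False using \<open>u \<in> U\<close> \<open>z \<notin> N\<close> UN(4) by blast
    qed
    then have "W \<inter> C N = {}" unfolding C_def using openin_Int_closure_of_eq_empty[OF W(1)] by blast
    moreover have "y \<in> W" using W x UN(3) by blast
    moreover have "C N \<in> \<C>" using UN(2) unfolding \<C>_def by blast
    ultimately show False using yin by blast
  qed
  have eq: "end_boundary X Y h e = \<Inter>\<C>"
    unfolding end_boundary_def cboundary_def \<C>_def C_def using disj[unfolded \<C>_def C_def]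
    by auto
  have ne: "\<C> \<noteq> {}" unfolding \<C>_def by blast
  show ?thesis unfolding eq using directed_Inter_connected[OF cY ne CC dir] by blast
qed

end
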